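(* Let $K,M,N_c,N_g,Q$ be positive integers with $N_g\le N_c$, let $\rho_{tr}>0$, and for each $k\in\{0,\dots,K-1\}$ let $\boldsymbol{\Omega}_k\in\mathbb{R}^{M\times N_g}$ have non-negative entries, let $\phi_k\in\{0,\dots,QN_c-1\}$, and let $\varrho_k(\cdot)$ be a real-valued function on the integers. Define $\bar{\boldsymbol{\Omega}}_{k}=[\boldsymbol{\Omega}_k\ \ \mathbf{0}_{M\times(N_c-N_g)}]$ and, for integers $n$, $\boldsymbol{\Omega}_{k'}^{n}=\bar{\boldsymbol{\Omega}}_{k'}\boldsymbol{\Pi}_{N_c}^{n}\mathbf{I}_{N_c\times N_g}$. Write $d_{k',k}=\lfloor\phi_{k'}/Q\rfloor-\lfloor\phi_k/Q\rfloor$ and $$D_{k,i,j}=\sum_{k'=0}^{K-1}\delta\big(\langle\phi_{k'}\rangle_Q-\langle\phi_k\rangle_Q\big)\,[\boldsymbol{\Omega}_{k'}^{d_{k',k}}]_{i,j}+\frac{1}{\rho_{tr}Q}.$$ Define $$\epsilon^{CE}_{(Q)}=\sum_{k=0}^{K-1}\sum_{i=0}^{M-1}\sum_{j=0}^{N_g-1}\left\{[\boldsymbol{\Omega}_k]_{i,j}-\frac{[\boldsymbol{\Omega}_k]_{i,j}^2}{D_{k,i,j}}\right\},\qquad \epsilon^{CP}_{(Q)}(\Delta_\ell)=\sum_{k=0}^{K-1}\sum_{i=0}^{M-1}\sum_{j=0}^{N_g-1}\left\{[\boldsymbol{\Omega}_k]_{i,j}-\frac{\varrho_k^2(\Delta_\ell)[\boldsymbol{\Omega}_k]_{i,j}^2}{D_{k,i,j}}\right\}.$$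 Then $$\epsilon^{CE}_{(Q)}\ge\varepsilon^{CE}_{(Q)}=\sum_{k,i,j}\left\{[\boldsymbol{\Omega}_k]_{i,j}-\frac{[\boldsymbol{\Omega}_k]_{i,j}^2}{[\boldsymbol{\Omega}_k]_{i,j}+\frac{1}{\rho_{tr}Q}}\right\},$$ and for every integer $\Delta_\ell$, $$\epsilon^{CP}_{(Q)}(\Delta_\ell)\ge\varepsilon^{CP}_{(Q)}(\Delta_\ell)=\sum_{k,i,j}\left\{[\boldsymbol{\Omega}_k]_{i,j}-\frac{\varrho_k^2(\Delta_\ell)[\boldsymbol{\Omega}_k]_{i,j}^2}{[\boldsymbol{\Omega}_k]_{i,j}+\frac{1}{\rho_{tr}Q}}\right\}$$ (sums over $k\in\{0,\dots,K-1\}$, $i\in\{0,\dots,M-1\}$, $j\in\{0,\dots,N_g-1\}$). Both lower bounds are achieved if, for all $k\neq k'$ with $\langle\phi_k\rangle_Q=\langle\phi_{k'}\rangle_Q$, $$\left(\bar{\boldsymbol{\Omega}}_{k}\boldsymbol{\Pi}_{N_c}^{\lfloor\phi_k/Q\rfloor}\right)\odot\left(\bar{\boldsymbol{\Omega}}_{k'}\boldsymbol{\Pi}_{N_c}^{\lfloor\phi_{k'}/Q\rfloor}\right)=\mathbf{0}.$$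
   Context: Indices start at $0$. $\langle n\rangle_N$ denotes $n$ modulo $N$, $\lfloor\cdot\rfloor$ the floor. $\delta(0)=1$ and $\delta(n)=0$ for integers $n\ne0$. $\boldsymbol{\Pi}_N^{n}=\begin{bmatrix}\mathbf{0}&\mathbf{I}_{N-\langle n\rangle_N}\\ \mathbf{I}_{\langle n\rangle_N}&\mathbf{0}\end{bmatrix}$; $\mathbf{I}_{N\times G}$ is the first $G$ columns of $\mathbf{I}_N$; $\odot$ is the Hadamard product. Interpretation: adjustable phase shift pilots sent over $Q$ consecutive OFDM symbols; $\boldsymbol{\Omega}_k$ is user $k$'s angle-delay channel power matrix, $\phi_k$ its pilot phase shift, $\rho_{tr}$ the pilot SNR, $\varrho_k$ the temporal correlation function; $\epsilon^{CE}_{(Q)}$ and $\epsilon^{CP}_{(Q)}(\Delta_\ell)$ are the sum MSEs of MMSE channel estimation and prediction. *)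

theory Defs
  imports Complex_Main
begin

text \<open>Matrices are represented as functions on 0-based row/column indices,
  with explicit dimension bounds.\<close>

definition kdelta :: "int \<Rightarrow> real" where
  "kdelta n = (if n = 0 then 1 else 0)"

text \<open>Permutation matrix Pi_N^n = [0, I_{N - <n>_N}; I_{<n>_N}, 0] (N x N),
  entry (r,c), written blockwise.\<close>
definition Pi_mat :: "nat \<Rightarrow> int \<Rightarrow> nat \<Rightarrow> nat \<Rightarrow> real" where
  "Pi_mat N n r c =
     (let s = nat (n mod int N) in
      if r < N - s then (if c = r + s then 1 else 0)
      else (if c + (N - s) = r then 1 else 0))"

text \<open>I_{N x G}: first G columns of I_N.\<close>
definition I_sel :: "nat \<Rightarrow> nat \<Rightarrow> real" where
  "I_sel r c = (if r = c then 1 else 0)"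

definition Obar :: "nat \<Rightarrow> (nat \<Rightarrow> nat \<Rightarrow> real) \<Rightarrow> nat \<Rightarrow> nat \<Rightarrow> real" where
  "Obar Ng A i c = (if c < Ng then A i c else 0)"

definition Obar_Pi :: "nat \<Rightarrow> nat \<Rightarrow> (nat \<Rightarrow> nat \<Rightarrow> real) \<Rightarrow> int \<Rightarrow> nat \<Rightarrow> nat \<Rightarrow> real" where
  "Obar_Pi Nc Ng A n i c = (\<Sum>r<Nc. Obar Ng A i r * Pi_mat Nc n r c)"

definition Omega_shift :: "nat \<Rightarrow> nat \<Rightarrow> (nat \<Rightarrow> nat \<Rightarrow> real) \<Rightarrow> int \<Rightarrow> nat \<Rightarrow> nat \<Rightarrow> real" where
  "Omega_shift Nc Ng A n i j = (\<Sum>c<Nc. Obar_Pi Nc Ng A n i c * I_sel c j)"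

definition dshift :: "nat \<Rightarrow> (nat \<Rightarrow> nat) \<Rightarrow> nat \<Rightarrow> nat \<Rightarrow> int" where
  "dshift Q \<phi> k' k = \<lfloor>real (\<phi> k') / real Q\<rfloor> - \<lfloor>real (\<phi> k) / real Q\<rfloor>"

definition Dden :: "nat \<Rightarrow> nat \<Rightarrow> nat \<Rightarrow> nat \<Rightarrow> real \<Rightarrow> (nat \<Rightarrow> nat \<Rightarrow> nat \<Rightarrow> real)
                    \<Rightarrow> (nat \<Rightarrow> nat) \<Rightarrow> nat \<Rightarrow> nat \<Rightarrow> nat \<Rightarrow> real" where
  "Dden K Nc Ng Q \<rho> \<Omega> \<phi> k i j =
     (\<Sum>k'<K. kdelta (int (\<phi> k' mod Q) - int (\<phi> k mod Q))
               * Omega_shift Nc Ng (\<Omega> k') (dshift Q \<phi> k' k) i j)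
     + 1 / (\<rho> * real Q)"

definition eps_CE :: "nat \<Rightarrow> nat \<Rightarrow> nat \<Rightarrow> nat \<Rightarrow> nat \<Rightarrow> real \<Rightarrow> (nat \<Rightarrow> nat \<Rightarrow> nat \<Rightarrow> real)
                    \<Rightarrow> (nat \<Rightarrow> nat) \<Rightarrow> real" where
  "eps_CE K M Nc Ng Q \<rho> \<Omega> \<phi> =
     (\<Sum>k<K. \<Sum>i<M. \<Sum>j<Ng. \<Omega> k i j - (\<Omega> k i j)\<^sup>2 / Dden K Nc Ng Q \<rho> \<Omega> \<phi> k i j)"

definition eps_CP :: "nat \<Rightarrow> nat \<Rightarrow> nat \<Rightarrow> nat \<Rightarrow> nat \<Rightarrow> real \<Rightarrow> (nat \<Rightarrow> nat \<Rightarrow> nat \<Rightarrow> real)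
                    \<Rightarrow> (nat \<Rightarrow> nat) \<Rightarrow> (nat \<Rightarrow> int \<Rightarrow> real) \<Rightarrow> int \<Rightarrow> real" where
  "eps_CP K M Nc Ng Q \<rho> \<Omega> \<phi> \<rho>c \<Delta> =
     (\<Sum>k<K. \<Sum>i<M. \<Sum>j<Ng. \<Omega> k i j - (\<rho>c k \<Delta>)\<^sup>2 * (\<Omega> k i j)\<^sup>2 / Dden K Nc Ng Q \<rho> \<Omega> \<phi> k i j)"

definition eps_CE_lb :: "nat \<Rightarrow> nat \<Rightarrow> nat \<Rightarrow> nat \<Rightarrow> real \<Rightarrow> (nat \<Rightarrow> nat \<Rightarrow> nat \<Rightarrow> real) \<Rightarrow> real" where
  "eps_CE_lb K M Ng Q \<rho> \<Omega> =
     (\<Sum>k<K. \<Sum>i<M. \<Sum>j<Ng. \<Omega> k i j - (\<Omega> k i j)\<^sup>2 / (\<Omega> k i j + 1 / (\<rho> * real Q)))"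

definition eps_CP_lb :: "nat \<Rightarrow> nat \<Rightarrow> nat \<Rightarrow> nat \<Rightarrow> real \<Rightarrow> (nat \<Rightarrow> nat \<Rightarrow> nat \<Rightarrow> real)
                       \<Rightarrow> (nat \<Rightarrow> int \<Rightarrow> real) \<Rightarrow> int \<Rightarrow> real" where
  "eps_CP_lb K M Ng Q \<rho> \<Omega> \<rho>c \<Delta> =
     (\<Sum>k<K. \<Sum>i<M. \<Sum>j<Ng. \<Omega> k i j - (\<rho>c k \<Delta>)\<^sup>2 * (\<Omega> k i j)\<^sup>2 / (\<Omega> k i j + 1 / (\<rho> * real Q)))"

end

theory Submission
  imports Defs
begin

lemma mod_shift_char:
  fixes N :: nat and r c :: nat and s :: int
  assumes "r < N" "c < N" "0 \<le> s" "s < int N"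
  shows "(if r < N - nat s then (c = r + nat s) else (c + (N - nat s) = r))
         \<longleftrightarrow> int r = (int c - s) mod int N"
proof (cases "int c \<ge> s")
  case True
  have "(int c - s) mod int N = int c - s"
    using assms True by (intro mod_pos_pos_trivial) auto
  then show ?thesis using assms True by auto
next
  case False
  have "(int c - s) mod int N = (int c - s + int N) mod int N" by simp
  also have "\<dots> = int c - s + int N"
    using assms False by (intro mod_pos_pos_trivial) auto
  finally show ?thesis using assms False by auto
qed

lemma Pi_mat_char:
  assumes "r < N" "c < N"
  shows "Pi_mat N n r c = (if r = nat ((int c - n) mod int N) then 1 else 0)"
proof -
  have N: "N > 0" using assms by auto
  define s where "s = n mod int N"
  have s: "0 \<le> s" "s < int N" using N by (auto simp: s_def)
  have e: "(int c - s) mod int N = (int c - n) mod int N"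
    unfolding s_def by (simp add: mod_diff_right_eq)
  have "0 \<le> (int c - n) mod int N" using N by simp
  hence eq: "(r = nat ((int c - n) mod int N)) \<longleftrightarrow> int r = (int c - n) mod int N" by auto
  have P: "Pi_mat N n r c = (if (if r < N - nat s then (c = r + nat s) else (c + (N - nat s) = r)) then 1 else 0)"
    unfolding Pi_mat_def Let_def s_def[symmetric] by simp
  show ?thesis
    unfolding P mod_shift_char[OF assms s] e eq by simp
qed

lemma Obar_Pi_char:
  assumes "c < N"
  shows "Obar_Pi N Ng A n i c = Obar Ng A i (nat ((int c - n) mod int N))"
proof -
  let ?t = "nat ((int c - n) mod int N)"
  have N: "N > 0" using assms by auto
  have t: "?t < N" using N by (simp add: nat_less_iff)
  have "Obar_Pi N Ng A n i c = (\<Sum>r<N. if r = ?t then Obar Ng A i r else 0)"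
    unfolding Obar_Pi_def
    by (rule sum.cong) (auto simp: Pi_mat_char assms)
  also have "\<dots> = Obar Ng A i ?t" using t by (simp add: sum.delta)
  finally show ?thesis .
qed

lemma Omega_shift_char:
  assumes "j < N"
  shows "Omega_shift N Ng A n i j = Obar Ng A i (nat ((int j - n) mod int N))"
proof -
  have "Omega_shift N Ng A n i j = (\<Sum>c<N. if c = j then Obar_Pi N Ng A n i c else 0)"
    unfolding Omega_shift_def I_sel_def by (rule sum.cong) auto
  also have "\<dots> = Obar_Pi N Ng A n i j" using assms by (simp add: sum.delta)
  finally show ?thesis using Obar_Pi_char[OF assms] by simp
qed

theorem proposition5:
  fixes K M Nc Ng Q :: nat
    and \<rho> :: real
    and \<Omega> :: "nat \<Rightarrow> nat \<Rightarrow> nat \<Rightarrow> real"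
    and \<phi> :: "nat \<Rightarrow> nat"
    and \<rho>c :: "nat \<Rightarrow> int \<Rightarrow> real"
  assumes "K > 0" "M > 0" "Nc > 0" "Ng > 0" "Q > 0" "Ng \<le> Nc"
    and "\<rho> > 0"
    and "\<And>k i j. k < K \<Longrightarrow> i < M \<Longrightarrow> j < Ng \<Longrightarrow> \<Omega> k i j \<ge> 0"
    and "\<And>k. k < K \<Longrightarrow> \<phi> k < Q * Nc"
  shows "eps_CE K M Nc Ng Q \<rho> \<Omega> \<phi> \<ge> eps_CE_lb K M Ng Q \<rho> \<Omega>
       \<and> (\<forall>\<Delta>::int. eps_CP K M Nc Ng Q \<rho> \<Omega> \<phi> \<rho>c \<Delta> \<ge> eps_CP_lb K M Ng Q \<rho> \<Omega> \<rho>c \<Delta>)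
       \<and> ((\<forall>k<K. \<forall>k'<K. k \<noteq> k' \<and> \<phi> k mod Q = \<phi> k' mod Q \<longrightarrow>
             (\<forall>i<M. \<forall>c<Nc.
                Obar_Pi Nc Ng (\<Omega> k) \<lfloor>real (\<phi> k) / real Q\<rfloor> i c
                * Obar_Pi Nc Ng (\<Omega> k') \<lfloor>real (\<phi> k') / real Q\<rfloor> i c = 0))
          \<longrightarrow> eps_CE K M Nc Ng Q \<rho> \<Omega> \<phi> = eps_CE_lb K M Ng Q \<rho> \<Omega>
            \<and> (\<forall>\<Delta>::int. eps_CP K M Nc Ng Q \<rho> \<Omega> \<phi> \<rho>c \<Delta> = eps_CP_lb K M Ng Q \<rho> \<Omega> \<rho>c \<Delta>))"
proof -
  define e where "e = 1 / (\<rho> * real Q)"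
  have epos: "e > 0" using assms by (simp add: e_def)
  define T where "T k i j k' = kdelta (int (\<phi> k' mod Q) - int (\<phi> k mod Q))
               * Omega_shift Nc Ng (\<Omega> k') (dshift Q \<phi> k' k) i j" for k i j k'
  have Tnn: "T k i j k' \<ge> 0" if "k' < K" "i < M" "j < Ng" for k i j k'
  proof -
    let ?t = "nat ((int j - dshift Q \<phi> k' k) mod int Nc)"
    have "Obar Ng (\<Omega> k') i ?t \<ge> 0" using assms(8)[OF that(1,2)] by (simp add: Obar_def)
    moreover have "kdelta x \<ge> 0" for x by (simp add: kdelta_def)
    ultimately show ?thesis unfolding T_def using that assms(6)
      by (simp add: Omega_shift_char)
  qed
  have Tk: "T k i j k = \<Omega> k i j" if "j < Ng" for k i j
    using that assms(6) by (simp add: T_def Omega_shift_char kdelta_def dshift_def Obar_def)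
  have Dsplit: "Dden K Nc Ng Q \<rho> \<Omega> \<phi> k i j = \<Omega> k i j + (\<Sum>k'\<in>{..<K}-{k}. T k i j k') + e"
    if "k < K" "j < Ng" for k i j
  proof -
    have "(\<Sum>k'<K. T k i j k') = T k i j k + (\<Sum>k'\<in>{..<K}-{k}. T k i j k')"
      using that by (simp add: sum.remove)
    thus ?thesis using Tk[OF that(2)] by (simp add: Dden_def T_def[abs_def] e_def)
  qed
  have Dge: "Dden K Nc Ng Q \<rho> \<Omega> \<phi> k i j \<ge> \<Omega> k i j + e"
    if "k < K" "i < M" "j < Ng" for k i j
  proof -
    have "(\<Sum>k'\<in>{..<K}-{k}. T k i j k') \<ge> 0" using Tnn that by (intro sum_nonneg) auto
    thus ?thesis using Dsplit[OF that(1,3)] by simp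
  qed
  have pos: "\<Omega> k i j + e > 0" if "k < K" "i < M" "j < Ng" for k i j
    using assms(8)[OF that] epos by simp
  have le1: "\<Omega> k i j - (\<Omega> k i j)\<^sup>2 / (\<Omega> k i j + e) \<le>
             \<Omega> k i j - (\<Omega> k i j)\<^sup>2 / Dden K Nc Ng Q \<rho> \<Omega> \<phi> k i j"
    if "k < K" "i < M" "j < Ng" for k i j
    using divide_left_mono[OF Dge[OF that] _ mult_pos_pos[OF _ pos[OF that]], of "(\<Omega> k i j)\<^sup>2"]
      pos[OF that] Dge[OF that] by auto
  have le2: "\<Omega> k i j - c * (\<Omega> k i j)\<^sup>2 / (\<Omega> k i j + e) \<le>
             \<Omega> k i j - c * (\<Omega> k i j)\<^sup>2 / Dden K Nc Ng Q \<rho> \<Omega> \<phi> k i j"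
    if "k < K" "i < M" "j < Ng" "c \<ge> 0" for k i j c
    using divide_left_mono[OF Dge[OF that(1-3)] _ mult_pos_pos[OF _ pos[OF that(1-3)]], of "c * (\<Omega> k i j)\<^sup>2"]
      pos[OF that(1-3)] Dge[OF that(1-3)] that(4) by auto
  have A: "eps_CE K M Nc Ng Q \<rho> \<Omega> \<phi> \<ge> eps_CE_lb K M Ng Q \<rho> \<Omega>"
    unfolding eps_CE_def eps_CE_lb_def e_def[symmetric]
    by (intro sum_mono) (use le1 in auto)
  have B: "eps_CP K M Nc Ng Q \<rho> \<Omega> \<phi> \<rho>c \<Delta> \<ge> eps_CP_lb K M Ng Q \<rho> \<Omega> \<rho>c \<Delta>" for \<Delta>
    unfolding eps_CP_def eps_CP_lb_def e_def[symmetric]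
    by (intro sum_mono) (use le2 in auto)
  have C: "eps_CE K M Nc Ng Q \<rho> \<Omega> \<phi> = eps_CE_lb K M Ng Q \<rho> \<Omega>
            \<and> (\<forall>\<Delta>::int. eps_CP K M Nc Ng Q \<rho> \<Omega> \<phi> \<rho>c \<Delta> = eps_CP_lb K M Ng Q \<rho> \<Omega> \<rho>c \<Delta>)"
    if H: "\<forall>k<K. \<forall>k'<K. k \<noteq> k' \<and> \<phi> k mod Q = \<phi> k' mod Q \<longrightarrow>
             (\<forall>i<M. \<forall>c<Nc.
                Obar_Pi Nc Ng (\<Omega> k) \<lfloor>real (\<phi> k) / real Q\<rfloor> i c
                * Obar_Pi Nc Ng (\<Omega> k') \<lfloor>real (\<phi> k') / real Q\<rfloor> i c = 0)"
  proof -
    have key: "\<Omega> k i j = 0 \<or> Dden K Nc Ng Q \<rho> \<Omega> \<phi> k i j = \<Omega> k i j + e"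
      if kij: "k < K" "i < M" "j < Ng" for k i j
    proof (cases "\<Omega> k i j = 0")
      case False
      have "T k i j k' = 0" if k': "k' \<in> {..<K}-{k}" for k'
      proof (cases "\<phi> k mod Q = \<phi> k' mod Q")
        case False
        hence "int (\<phi> k' mod Q) - int (\<phi> k mod Q) \<noteq> 0" by auto
        thus ?thesis by (simp add: T_def kdelta_def)
      next
        case True
        define fk where "fk = \<lfloor>real (\<phi> k) / real Q\<rfloor>"
        define fk' where "fk' = \<lfloor>real (\<phi> k') / real Q\<rfloor>"
        define c where "c = nat ((int j + fk) mod int Nc)"
        have cN: "c < Nc" using assms(3) by (simp add: c_def nat_less_iff)
        have jN: "j < Nc" using kij assms(6) by simp
        have "Obar_Pi Nc Ng (\<Omega> k) fk i c * Obar_Pi Nc Ng (\<Omega> k') fk' i c = 0"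
          using H k' kij True cN unfolding fk_def fk'_def by auto
        moreover have "Obar_Pi Nc Ng (\<Omega> k) fk i c = \<Omega> k i j"
        proof -
          have "(int c - fk) mod int Nc = ((int j + fk) mod int Nc - fk) mod int Nc"
            using assms(3) by (simp add: c_def)
          also have "\<dots> = int j mod int Nc" by (simp add: mod_diff_left_eq)
          also have "\<dots> = int j" using jN by simp
          finally show ?thesis using cN kij(3) by (simp add: Obar_Pi_char Obar_def)
        qed
        moreover have "Obar_Pi Nc Ng (\<Omega> k') fk' i c =
            Omega_shift Nc Ng (\<Omega> k') (dshift Q \<phi> k' k) i j"
        proof -
          have "(int c - fk') mod int Nc = ((int j + fk) mod int Nc - fk') mod int Nc"
            using assms(3) by (simp add: c_def)
          also have "\<dots> = (int j - (fk' - fk)) mod int Nc" by (simp add: mod_diff_left_eq algebra_simps)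
          finally show ?thesis using cN jN
            by (simp add: Obar_Pi_char Omega_shift_char dshift_def fk_def fk'_def)
        qed
        ultimately show ?thesis using False by (simp add: T_def)
      qed
      hence "(\<Sum>k'\<in>{..<K}-{k}. T k i j k') = 0" by simp
      then show ?thesis using Dsplit that by simp
    qed simp
    have e1: "\<Omega> k i j - c * (\<Omega> k i j)\<^sup>2 / Dden K Nc Ng Q \<rho> \<Omega> \<phi> k i j
            = \<Omega> k i j - c * (\<Omega> k i j)\<^sup>2 / (\<Omega> k i j + e)"
      if "k < K" "i < M" "j < Ng" for k i j c
      using key[OF that] by auto
    have e0: "\<Omega> k i j - (\<Omega> k i j)\<^sup>2 / Dden K Nc Ng Q \<rho> \<Omega> \<phi> k i j
            = \<Omega> k i j - (\<Omega> k i j)\<^sup>2 / (\<Omega> k i j + e)"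
      if "k < K" "i < M" "j < Ng" for k i j
      using e1[OF that, of 1] by simp
    show ?thesis
      unfolding eps_CE_def eps_CE_lb_def eps_CP_def eps_CP_lb_def e_def[symmetric]
      by (intro conjI allI sum.cong refl) (simp_all add: e0 e1)
  qed
  show ?thesis using A B C by blast
qed

end
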